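(* Let $p:\mathbb{R}^+\times\mathbb{R}^+\to[0,\infty)$ be bounded and continuous in $N$, and let $(n^0_j)_{j\ge1}$ be a nonnegative sequence with $\|n^0\|_1<\infty$ and $\|n^0\|_\infty<\infty$. Let $(n^m_j)$, $(N^m)$ be generated by the ITM upwind scheme under the CFL condition. Then for every $m\in\mathbb{N}$, $\|n^m\|_1=\sum_{j\ge1}\Delta s\,n^m_j=\|n^0\|_1$.
   Context: ITM upwind scheme: fix $\Delta s,\Delta t>0$; set $s_j=(j-\tfrac12)\Delta s$, $I_j=[(j-1)\Delta s,j\Delta s)$ for $j\in\{1,2,\dots\}$, and $t^m=m\Delta t$. For a sequence $u=(u_j)_{j\ge1}$, $\|u\|_1=\sum_{j\ge1}\Delta s|u_j|$ and $\|u\|_\infty=\sup_j|u_j|$. Given nonnegative initial values $(n^0_j)_{j\ge1}$, for $m=0,1,2,\dots$: $N^m\ge0$ is a solution of $N^m=\sum_{j\ge1}\Delta s\,p(s_j,N^m)\,n^m_j$ (a nonnegative solution always exists), one sets $n^m_0:=N^m$, and $n^{m+1}_j=n^m_j-\frac{\Delta t}{\Delta s}(n^m_j-n^m_{j-1})-\Delta t\,p(s_j,N^m)\,n^m_j$ for $j\ge1$. CFL condition: $\Delta t\le\left(\frac{1}{\Delta s}+\|p\|_\infty\right)^{-1}$, where $\|p\|_\infty=\sup|p|$. *)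

theory Defs
  imports "HOL-Analysis.Analysis"
begin

definition grid_s :: "real \<Rightarrow> nat \<Rightarrow> real" where
  "grid_s ds j = (real j - 1/2) * ds"

definition norm1 :: "real \<Rightarrow> (nat \<Rightarrow> real) \<Rightarrow> real" where
  "norm1 ds u = (\<Sum>\<^sub>\<infinity>j\<in>{1..}. ds * \<bar>u j\<bar>)"

definition normInf :: "(nat \<Rightarrow> real) \<Rightarrow> real" where
  "normInf u = (SUP j\<in>{1..}. \<bar>u j\<bar>)"

definition pnorm :: "(real \<Rightarrow> real \<Rightarrow> real) \<Rightarrow> real" where
  "pnorm p = (SUP x\<in>{0..} \<times> {0..}. \<bar>p (fst x) (snd x)\<bar>)"

text \<open>The ITM upwind scheme: n m j is n^m_j (with n m 0 = N^m), NN m is N^m.\<close>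
definition ITM_upwind ::
  "(real \<Rightarrow> real \<Rightarrow> real) \<Rightarrow> real \<Rightarrow> real \<Rightarrow> (nat \<Rightarrow> nat \<Rightarrow> real) \<Rightarrow> (nat \<Rightarrow> real) \<Rightarrow> bool" where
  "ITM_upwind p ds dt n NN \<longleftrightarrow>
     (\<forall>m. NN m \<ge> 0
        \<and> ((\<lambda>j. ds * p (grid_s ds j) (NN m) * n m j) has_sum NN m) {1..}
        \<and> n m 0 = NN m
        \<and> (\<forall>j\<ge>1. n (Suc m) j = n m j - dt / ds * (n m j - n m (j - 1))
                                 - dt * p (grid_s ds j) (NN m) * n m j))"

end

theory Submission
  imports Defs
begin

lemma step_lemma:
  fixes p :: "real \<Rightarrow> real \<Rightarrow> real" and ds dt :: real and n :: "nat \<Rightarrow> nat \<Rightarrow> real"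
    and NN :: "nat \<Rightarrow> real"
  assumes ds_pos: "ds > 0" and dt_pos: "dt > 0"
    and p_nonneg: "\<And>s N. s \<ge> 0 \<Longrightarrow> N \<ge> 0 \<Longrightarrow> p s N \<ge> 0"
    and p_bdd: "bdd_above ((\<lambda>x. \<bar>p (fst x) (snd x)\<bar>) ` ({0..} \<times> {0..}))"
    and init_nonneg: "\<And>j. j \<ge> 1 \<Longrightarrow> n 0 j \<ge> 0"
    and init_L1: "(\<lambda>j. ds * \<bar>n 0 j\<bar>) summable_on {1..}"
    and scheme: "ITM_upwind p ds dt n NN"
    and CFL: "dt \<le> inverse (1 / ds + pnorm p)"
  shows "(\<forall>j\<ge>1. n m j \<ge> 0) \<and> (n m has_sum infsum (n 0) {1..}) {1..}"
proof (induction m)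
  case 0
  have "(\<lambda>j. inverse ds * (ds * \<bar>n 0 j\<bar>)) summable_on {1..}"
    using init_L1 summable_on_cmult_right by blast
  moreover have "\<And>j. j \<in> {1..} \<Longrightarrow> inverse ds * (ds * \<bar>n 0 j\<bar>) = n 0 j"
    using ds_pos init_nonneg by auto
  ultimately have "n 0 summable_on {1..}"
    using summable_on_cong[of "{1..}" "\<lambda>j. inverse ds * (ds * \<bar>n 0 j\<bar>)" "n 0"] by blast
  then show ?case using init_nonneg by auto
next
  case (Suc m)
  define S where "S = infsum (n 0) {1..}"
  define N where "N = NN m"
  define P where "P = (\<lambda>j. p (grid_s ds j) N)"
  have sc: "N \<ge> 0" "((\<lambda>j. ds * P j * n m j) has_sum N) {1..}" "n m 0 = N"
    "\<And>j. j \<ge> 1 \<Longrightarrow> n (Suc m) j = n m j - dt / ds * (n m j - n m (j - 1)) - dt * P j * n m j"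
  proof -
    have "NN m \<ge> 0
        \<and> ((\<lambda>j. ds * p (grid_s ds j) (NN m) * n m j) has_sum NN m) {1..}
        \<and> n m 0 = NN m
        \<and> (\<forall>j\<ge>1. n (Suc m) j = n m j - dt / ds * (n m j - n m (j - 1))
                                 - dt * p (grid_s ds j) (NN m) * n m j)"
      using scheme unfolding ITM_upwind_def by blast
    then show "N \<ge> 0" "((\<lambda>j. ds * P j * n m j) has_sum N) {1..}" "n m 0 = N"
      "\<And>j. j \<ge> 1 \<Longrightarrow> n (Suc m) j = n m j - dt / ds * (n m j - n m (j - 1)) - dt * P j * n m j"
      unfolding N_def P_def by auto
  qed
  have nn: "\<And>j. j \<ge> 1 \<Longrightarrow> n m j \<ge> 0" and hs: "(n m has_sum S) {1..}"
    using Suc S_def by auto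
  have nn0: "n m j \<ge> 0" for j using nn sc by (cases "j = 0") auto
  have PleS: "P j \<le> pnorm p" if "j \<ge> 1" for j
  proof -
    have g: "grid_s ds j \<ge> 0" using that ds_pos unfolding grid_s_def by auto
    have "\<bar>p (fst (grid_s ds j, N)) (snd (grid_s ds j, N))\<bar> \<le> pnorm p"
      unfolding pnorm_def using g sc(1) by (intro cSUP_upper p_bdd) auto
    then show ?thesis unfolding P_def by auto
  qed
  have Pnn: "P j \<ge> 0" if "j \<ge> 1" for j
    using p_nonneg that ds_pos sc(1) unfolding P_def grid_s_def by auto
  have pn0: "pnorm p \<ge> 0" using PleS Pnn[of 1] by fastforce
  have coef: "1 - dt / ds - dt * P j \<ge> 0" if "j \<ge> 1" for j
  proof -
    have pos: "1 / ds + pnorm p > 0" using ds_pos pn0 by (simp add: add_pos_nonneg)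
    have "dt * (1 / ds + pnorm p) \<le> 1"
      using CFL pos by (simp add: field_simps)
    moreover have "dt * P j \<le> dt * pnorm p" using PleS[OF that] dt_pos by simp
    ultimately show ?thesis by (simp add: field_simps)
  qed
  have nonneg: "\<forall>j\<ge>1. n (Suc m) j \<ge> 0"
  proof (intro allI impI)
    fix j :: nat assume j: "j \<ge> 1"
    have "n (Suc m) j = (1 - dt / ds - dt * P j) * n m j + dt / ds * n m (j - 1)"
      using sc(4)[OF j] by (simp add: algebra_simps)
    also have "\<dots> \<ge> 0" using coef[OF j] nn0 dt_pos ds_pos by simp
    finally show "n (Suc m) j \<ge> 0" .
  qed
  have hU: "(n m has_sum (N + S)) UNIV"
  proof -
    have "(n m has_sum (n m 0 + S)) (insert 0 {1..})" by (rule has_sum_insert) (use hs in auto)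
    moreover have "insert 0 {1..} = (UNIV :: nat set)" by auto
    ultimately show ?thesis using sc(3) by simp
  qed
  have hshift: "((\<lambda>j. n m (j - 1)) has_sum (N + S)) {1..}"
  proof -
    have img: "Suc ` UNIV = {1..}" by (auto simp: image_iff Suc_le_eq gr0_conv_Suc)
    have "((\<lambda>j. n m (j - 1)) \<circ> Suc) = n m" by auto
    then have "((\<lambda>j. n m (j - 1)) has_sum (N + S)) (Suc ` UNIV)"
      using has_sum_reindex[of Suc UNIV "\<lambda>j. n m (j - 1)"] hU by simp
    then show ?thesis using img by simp
  qed
  have h1: "((\<lambda>j. (1 - dt / ds) * n m j) has_sum ((1 - dt / ds) * S)) {1..}"
    using has_sum_cmult_right[OF hs] .
  have h2: "((\<lambda>j. dt / ds * n m (j - 1)) has_sum (dt / ds * (N + S))) {1..}"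
    using has_sum_cmult_right[OF hshift] .
  have h3: "((\<lambda>j. (- dt / ds) * (ds * P j * n m j)) has_sum ((- dt / ds) * N)) {1..}"
    using has_sum_cmult_right[OF sc(2)] .
  have hh: "((\<lambda>j. (1 - dt / ds) * n m j + dt / ds * n m (j - 1) + (- dt / ds) * (ds * P j * n m j))
     has_sum ((1 - dt / ds) * S + dt / ds * (N + S) + (- dt / ds) * N)) {1..}"
    by (intro has_sum_add h1 h2 h3)
  have eqv: "(1 - dt / ds) * S + dt / ds * (N + S) + (- dt / ds) * N = S"
    by (simp add: algebra_simps add_divide_distrib)
  have "\<And>j. j \<in> {1..} \<Longrightarrow> (1 - dt / ds) * n m j + dt / ds * n m (j - 1) + (- dt / ds) * (ds * P j * n m j)
        = n (Suc m) j"
    using sc(4) ds_pos by (auto simp: field_simps)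
  then have "(n (Suc m) has_sum S) {1..}" using hh eqv has_sum_cong by (metis (no_types, lifting))
  then show ?case using nonneg S_def by simp
qed

theorem mainTheorem3:
  fixes p :: "real \<Rightarrow> real \<Rightarrow> real"
    and ds dt :: real
    and n :: "nat \<Rightarrow> nat \<Rightarrow> real"
    and NN :: "nat \<Rightarrow> real"
  assumes ds_pos: "ds > 0" and dt_pos: "dt > 0"
    and p_nonneg: "\<And>s N. s \<ge> 0 \<Longrightarrow> N \<ge> 0 \<Longrightarrow> p s N \<ge> 0"
    and p_bdd: "bdd_above ((\<lambda>x. \<bar>p (fst x) (snd x)\<bar>) ` ({0..} \<times> {0..}))"
    and p_cont: "\<And>s. s \<ge> 0 \<Longrightarrow> continuous_on {0..} (p s)"
    and init_nonneg: "\<And>j. j \<ge> 1 \<Longrightarrow> n 0 j \<ge> 0"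
    and init_L1: "(\<lambda>j. ds * \<bar>n 0 j\<bar>) summable_on {1..}"
    and init_Linf: "bdd_above ((\<lambda>j. \<bar>n 0 j\<bar>) ` {1..})"
    and scheme: "ITM_upwind p ds dt n NN"
    and CFL: "dt \<le> inverse (1 / ds + pnorm p)"
  shows "(\<lambda>j. ds * \<bar>n m j\<bar>) summable_on {1..}
         \<and> norm1 ds (n m) = (\<Sum>\<^sub>\<infinity>j\<in>{1..}. ds * n m j)
         \<and> (\<Sum>\<^sub>\<infinity>j\<in>{1..}. ds * n m j) = norm1 ds (n 0)"
proof -
  define S where "S = infsum (n 0) {1..}"
  have A: "\<And>k. (\<forall>j\<ge>1. n k j \<ge> 0) \<and> (n k has_sum S) {1..}"
    unfolding S_def by (rule step_lemma[OF ds_pos dt_pos p_nonneg p_bdd init_nonneg init_L1 scheme CFL])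
  have abs_eq: "\<And>k j. j \<in> {1..} \<Longrightarrow> ds * \<bar>n k j\<bar> = ds * n k j" using A by auto
  have hk: "\<And>k. ((\<lambda>j. ds * \<bar>n k j\<bar>) has_sum (ds * S)) {1..}"
  proof -
    fix k
    have "((\<lambda>j. ds * n k j) has_sum (ds * S)) {1..}" using has_sum_cmult_right A by blast
    then show "((\<lambda>j. ds * \<bar>n k j\<bar>) has_sum (ds * S)) {1..}"
      using has_sum_cong[of "{1..}" "\<lambda>j. ds * \<bar>n k j\<bar>" "\<lambda>j. ds * n k j"] abs_eq by blast
  qed
  have hk2: "((\<lambda>j. ds * n m j) has_sum (ds * S)) {1..}" using has_sum_cmult_right A by blast
  show ?thesis
    unfolding norm1_def
    using hk[of m] hk[of 0] hk2 infsumI has_sum_imp_summable by metis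
qed

end
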